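(* The map $R$ is uniformly DC1-chaotic: there exist an uncountable set $S\subset[0,1]$ and a constant $\bar\delta>0$ such that for all $x\ne y$ in $S$ and every $\delta>0$, $$\limsup_{n\to\infty}\frac1n\#\{0\le k\le n-1:|R^k(x)-R^k(y)|<\delta\}=1,$$ $$\liminf_{n\to\infty}\frac1n\#\{0\le k\le n-1:|R^k(x)-R^k(y)|<\bar\delta\}=0.$$
   Context: Define $\rho$ on binary words: for $b=b_1b_2\dots$, $\rho(b)$ is obtained by deleting every digit $b_n=0$ and replacing every $b_n=1$ by $0$ if $n$ is odd and by $1$ if $n$ is even. For $x\in(0,1]$ let $\beta(x)$ be the unique binary expansion of $x$ with infinitely many $1$'s. Define $R:[0,1]\to[0,1]$ by $R(0)=2/3$ and, for $x\in(0,1]$, $R(x)=\sum_{n\ge1}c_n2^{-n}$ where $c=\rho(\beta(x))$. $\#$ denotes cardinality. *)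

theory Defs
  imports Complex_Main "HOL-Library.Infinite_Set" "HOL-Library.Countable_Set"
    "HOL-Library.Extended_Real"
begin

text \<open>Binary words are modelled 0-indexed as nat \<Rightarrow> bool: the paper's digit b_(i+1)
  is b i (True = 1). Hence the paper's position n = i+1 is odd iff i is even.\<close>

text \<open>rho: delete zeros, replace the 1 at (paper) position n by 0 if n odd, 1 if n even.
  Only used on words with infinitely many ones.\<close>
definition rho :: "(nat \<Rightarrow> bool) \<Rightarrow> (nat \<Rightarrow> bool)" where
  "rho b = (\<lambda>j. odd (enumerate {i. b i} j))"

definition bin_val :: "(nat \<Rightarrow> bool) \<Rightarrow> real" where
  "bin_val b = (\<Sum>i. (if b i then 1 else 0) / 2 ^ (Suc i))"

definition beta :: "real \<Rightarrow> (nat \<Rightarrow> bool)" where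
  "beta x = (THE b. bin_val b = x \<and> infinite {i. b i})"

definition R :: "real \<Rightarrow> real" where
  "R x = (if x = 0 then 2/3 else bin_val (rho (beta x)))"

end

theory Submission
  imports Defs
begin


definition trm :: "(nat \<Rightarrow> bool) \<Rightarrow> nat \<Rightarrow> real" where
  "trm b i = (if b i then 1 else 0) / 2 ^ (Suc i)"

lemma trm_nonneg: "0 \<le> trm b i" by (simp add: trm_def)
lemma trm_le: "trm b i \<le> 1 / 2 ^ Suc i" by (simp add: trm_def)

lemma geo_sums: "(\<lambda>i. 1 / 2 ^ Suc i :: real) sums 1"
proof -
  have "(\<lambda>i. (1/2) * (1/2::real) ^ i) sums ((1/2) * (1 / (1 - 1/2)))"
    by (intro sums_mult geometric_sums) simp
  then show ?thesis by (simp add: power_one_over)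
qed

lemma geo_summable: "summable (\<lambda>i. 1 / 2 ^ Suc i :: real)"
  using geo_sums by (rule sums_summable)

lemma summable_trm: "summable (trm b)"
proof -
  have "\<forall>n. norm (trm b n) \<le> 1/2^Suc n" using trm_le trm_nonneg by simp
  then show ?thesis by (intro summable_comparison_test[OF _ geo_summable]) blast
qed

lemma bin_val_trm: "bin_val b = suminf (trm b)"
  unfolding bin_val_def trm_def[abs_def] ..

lemma bin_val_ge0: "0 \<le> bin_val b"
  by (simp add: bin_val_trm suminf_nonneg summable_trm trm_nonneg)

lemma bin_val_le1: "bin_val b \<le> 1"
proof -
  have "suminf (trm b) \<le> (\<Sum>i. 1 / 2 ^ Suc i :: real)"
    apply (rule suminf_le) using trm_le summable_trm geo_summable by blast+
  then show ?thesis using geo_sums sums_unique by (fastforce simp: bin_val_trm)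
qed

lemma bin_val_step: "bin_val b = trm b 0 + bin_val (\<lambda>i. b (Suc i)) / 2"
proof -
  have "suminf (\<lambda>i. trm b (Suc i)) = suminf (trm b) - trm b 0"
    by (rule suminf_split_head[OF summable_trm])
  moreover have "(\<lambda>i. trm b (Suc i)) = (\<lambda>i. trm (\<lambda>i. b (Suc i)) i / 2)"
    by (auto simp: trm_def)
  moreover have "suminf (\<lambda>i. trm (\<lambda>i. b (Suc i)) i / 2) = suminf (trm (\<lambda>i. b (Suc i))) / 2"
    by (rule suminf_divide[OF summable_trm])
  ultimately have "bin_val (\<lambda>i. b (Suc i)) / 2 = bin_val b - trm b 0"
    by (simp add: bin_val_trm)
  then show ?thesis by linarith
qed

lemma bin_val_split: "bin_val b = (\<Sum>i<n. trm b i) + bin_val (\<lambda>i. b (i + n)) / 2 ^ n"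
proof (induction n arbitrary: b)
  case 0 then show ?case by simp
next
  case (Suc n)
  have "bin_val (\<lambda>i. b (i + n)) = trm b n * 2 ^ n + bin_val (\<lambda>i. b (i + Suc n)) / 2"
    by (subst bin_val_step) (simp add: trm_def)
  then have "bin_val (\<lambda>i. b (i + n)) / 2 ^ n = trm b n + bin_val (\<lambda>i. b (i + Suc n)) / 2 ^ Suc n"
    by (simp add: field_simps)
  with Suc[of b] show ?case by simp
qed

lemma bin_val_ge_half: "b 0 \<Longrightarrow> 1/2 \<le> bin_val b"
  using bin_val_step[of b] bin_val_ge0[of "\<lambda>i. b (Suc i)"] by (simp add: trm_def)

lemma bin_val_le_quarter: "\<not> b 0 \<Longrightarrow> \<not> b 1 \<Longrightarrow> bin_val b \<le> 1/4"
proof -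
  assume a: "\<not> b 0" "\<not> b 1"
  have "trm b 0 = 0" "trm (\<lambda>i. b (Suc i)) 0 = 0" using a by (auto simp: trm_def)
  then show ?thesis
    using bin_val_step[of b] bin_val_step[of "\<lambda>i. b (Suc i)"] bin_val_le1[of "\<lambda>i. b (Suc (Suc i))"]
    by linarith
qed

lemma bin_val_close:
  assumes "\<forall>p<n. b p = c p"
  shows "\<bar>bin_val b - bin_val c\<bar> \<le> 1 / 2 ^ n"
proof -
  have "(\<Sum>i<n. trm b i) = (\<Sum>i<n. trm c i)"
    using assms by (auto simp: trm_def intro!: sum.cong)
  then have "bin_val b - bin_val c = (bin_val (\<lambda>i. b (i + n)) - bin_val (\<lambda>i. c (i + n))) / 2 ^ n"
    using bin_val_split[of b n] bin_val_split[of c n] by (simp add: diff_divide_distrib)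
  moreover have "\<bar>bin_val (\<lambda>i. b (i + n)) - bin_val (\<lambda>i. c (i + n))\<bar> \<le> 1"
    using bin_val_ge0[of "\<lambda>i. b (i + n)"] bin_val_le1[of "\<lambda>i. b (i + n)"]
      bin_val_ge0[of "\<lambda>i. c (i + n)"] bin_val_le1[of "\<lambda>i. c (i + n)"] by linarith
  ultimately show ?thesis by (simp add: abs_divide divide_right_mono)
qed

lemma bin_val_pos: "b i \<Longrightarrow> 0 < bin_val b"
proof -
  assume "b i"
  have "trm b i \<le> (\<Sum>j<Suc i. trm b j)"
    by (rule member_le_sum) (auto simp: trm_nonneg)
  moreover have "0 < trm b i" using \<open>b i\<close> by (simp add: trm_def)
  moreover have "0 \<le> bin_val (\<lambda>j. b (j + Suc i)) / 2 ^ Suc i" by (simp add: bin_val_ge0)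
  ultimately show ?thesis using bin_val_split[of b "Suc i"] by linarith
qed

lemma bin_val_less:
  assumes "\<forall>p<i. b p = c p" "b i" "\<not> c i" "infinite {j. b j}"
  shows "bin_val c < bin_val b"
proof -
  have S: "(\<Sum>j<i. trm b j) = (\<Sum>j<i. trm c j)"
    using assms by (auto simp: trm_def intro!: sum.cong)
  obtain j where j: "j > i" "b j" using assms(4)
    by (metis (mono_tags, lifting) finite_nat_set_iff_bounded_le mem_Collect_eq not_le)
  have pos: "0 < bin_val (\<lambda>k. b (k + Suc i))"
    by (rule bin_val_pos[of _ "j - Suc i"]) (use j in simp)
  have "bin_val b = (\<Sum>j<i. trm b j) + trm b i + bin_val (\<lambda>k. b (k + Suc i)) / 2 ^ Suc i"
    using bin_val_split[of b "Suc i"] by simp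
  moreover have "bin_val c = (\<Sum>j<i. trm c j) + trm c i + bin_val (\<lambda>k. c (k + Suc i)) / 2 ^ Suc i"
    using bin_val_split[of c "Suc i"] by simp
  moreover have "bin_val (\<lambda>k. c (k + Suc i)) / 2 ^ Suc i \<le> 1 / 2 ^ Suc i"
    by (simp add: bin_val_le1 divide_right_mono)
  moreover have "0 < bin_val (\<lambda>k. b (k + Suc i)) / 2 ^ Suc i" using pos by simp
  ultimately show ?thesis using S assms(2,3) by (simp add: trm_def)
qed

lemma bin_val_inj:
  assumes "infinite {j. b j}" "infinite {j. c j}" "bin_val b = bin_val c"
  shows "b = c"
proof (rule ccontr)
  assume "b \<noteq> c"
  then have "\<exists>i. b i \<noteq> c i" by auto
  define i where "i = (LEAST i. b i \<noteq> c i)"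
  have ne: "b i \<noteq> c i" unfolding i_def by (rule LeastI_ex) fact
  have eq: "\<forall>p<i. b p = c p" unfolding i_def using not_less_Least by blast
  show False
  proof (cases "b i")
    case True
    then show ?thesis using bin_val_less[of i b c] eq ne assms by auto
  next
    case False
    then show ?thesis using bin_val_less[of i c b] eq ne assms by auto
  qed
qed

lemma beta_bin_val: "infinite {j. b j} \<Longrightarrow> beta (bin_val b) = b"
  unfolding beta_def by (rule the_equality) (auto dest: bin_val_inj)




lemma enumerate_strict_mono:
  fixes g :: "nat \<Rightarrow> nat"
  assumes g: "strict_mono g"
  shows "enumerate (range g) n = g n"
proof (induction n)
  case 0
  show ?case unfolding enumerate_0 by (rule Least_equality) (auto simp: strict_mono_less_eq[OF g])
next
  case (Suc n)
  have inf: "infinite (range g)" using g strict_mono_imp_inj_on range_inj_infinite by blast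
  show ?case unfolding enumerate_Suc''[OF inf] Suc
  proof (rule Least_equality)
    show "g (Suc n) \<in> range g \<and> g n < g (Suc n)" using g by (auto simp: strict_mono_def)
  next
    fix s assume "s \<in> range g \<and> g n < s"
    then obtain m where "s = g m" "g n < g m" by auto
    then have "Suc n \<le> m" using g by (simp add: strict_mono_less)
    then show "g (Suc n) \<le> s" using \<open>s = g m\<close> g by (simp add: strict_mono_less_eq)
  qed
qed

definition blen :: "bool \<Rightarrow> nat" where "blen a = (if a then 2 else 4)"
definition blk :: "bool \<Rightarrow> bool \<Rightarrow> nat \<Rightarrow> bool" where
  "blk a b p = (if a then p = 0 else if b then p = 3 else p = 2)"
definition bpos :: "bool \<Rightarrow> bool \<Rightarrow> nat" where
  "bpos a b = (if a then 0 else if b then 3 else 2)"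

lemma blk_iff: "blk a b p \<longleftrightarrow> p = bpos a b" by (simp add: blk_def bpos_def)

function W :: "(nat \<Rightarrow> bool) \<Rightarrow> nat \<Rightarrow> nat \<Rightarrow> bool" where
  "W f k p = (if p < blen (f k) then blk (f k) (f (Suc k)) p
     else (if W f (Suc k) ((p - blen (f k)) div 2 + 1) then odd (p - blen (f k)) else even (p - blen (f k))))"
  by pat_completeness auto
termination
  by (relation "measure (\<lambda>(f,k,p). p)") (auto simp: blen_def split: if_splits)

declare W.simps[simp del]

lemma W0: "W f k 0 = f k"
  by (subst W.simps) (simp add: blen_def blk_def)

lemma W_low: "p < blen (f k) \<Longrightarrow> W f k p = blk (f k) (f (Suc k)) p"
  by (subst W.simps) simp

lemma W_high: assumes "r < 2" shows "W f k (blen (f k) + 2 * j + r) = (W f (Suc k) (Suc j) = (r = 1))"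
proof -
  have a: "\<not> (blen (f k) + 2 * j + r < blen (f k))" by simp
  have b: "(blen (f k) + 2 * j + r - blen (f k)) div 2 + 1 = Suc j" using assms by simp
  have c: "odd (blen (f k) + 2 * j + r - blen (f k)) = (r = 1)"
    "even (blen (f k) + 2 * j + r - blen (f k)) = (r \<noteq> 1)" using assms by (auto simp: less_2_cases_iff)
  show ?thesis by (subst W.simps) (simp only: a b c if_False, auto)
qed

definition pos :: "(nat \<Rightarrow> bool) \<Rightarrow> nat \<Rightarrow> nat \<Rightarrow> nat" where
  "pos f k j = (if j = 0 then bpos (f k) (f (Suc k))
     else blen (f k) + 2 * (j - 1) + (if W f (Suc k) j then 1 else 0))"

lemma even_blen: "even (blen a)" by (simp add: blen_def)
lemma bpos_lt: "bpos a b < blen a" by (simp add: bpos_def blen_def)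

lemma pos_mono: "strict_mono (pos f k)"
unfolding strict_mono_Suc_iff
proof
  fix j show "pos f k j < pos f k (Suc j)"
    using bpos_lt[of "f k" "f (Suc k)"] by (auto simp: pos_def)
qed

lemma ones_W: "{i. W f k i} = range (pos f k)"
proof (intro equalityI subsetI)
  fix i assume "i \<in> {i. W f k i}"
  then have Wi: "W f k i" by simp
  show "i \<in> range (pos f k)"
  proof (cases "i < blen (f k)")
    case True
    then have "i = pos f k 0" using Wi W_low[of i f k, OF True] by (simp add: blk_iff pos_def)
    then show ?thesis by blast
  next
    case False
    define d where "d = i - blen (f k)"
    have i: "i = blen (f k) + 2 * (d div 2) + d mod 2" using False d_def by simp
    have "W f k i = (W f (Suc k) (Suc (d div 2)) = (d mod 2 = 1))"
      using W_high[of "d mod 2" f k "d div 2"] i by simp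
    with Wi have "i = pos f k (Suc (d div 2))"
      by (subst i) (auto simp: pos_def, presburger+)
    then show ?thesis by blast
  qed
next
  fix i assume "i \<in> range (pos f k)"
  then obtain j where j: "i = pos f k j" by auto
  show "i \<in> {i. W f k i}"
  proof (cases j)
    case 0
    then show ?thesis using j W_low[of _ f k, OF bpos_lt] by (simp add: pos_def blk_iff)
  next
    case (Suc j')
    have "W f k (blen (f k) + 2 * j' + (if W f (Suc k) j then 1 else 0))"
      using W_high[of "(if W f (Suc k) j then 1 else 0)" f k j'] Suc by auto
    then show ?thesis using j Suc by (simp add: pos_def)
  qed
qed

definition valid :: "(nat \<Rightarrow> bool) \<Rightarrow> bool" where
  "valid f \<longleftrightarrow> (\<forall>k. f k \<longrightarrow> \<not> f (Suc k))"

lemma infinite_W: "infinite {i. W f k i}"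
  unfolding ones_W using pos_mono strict_mono_imp_inj_on range_inj_infinite by blast

lemma rho_W: assumes "valid f" shows "rho (W f k) = W f (Suc k)"
proof
  fix j
  have "rho (W f k) j = odd (pos f k j)"
    unfolding rho_def ones_W enumerate_strict_mono[OF pos_mono] ..
  also have "\<dots> = W f (Suc k) j"
  proof (cases j)
    case 0
    then show ?thesis using assms by (auto simp: pos_def bpos_def W0 valid_def)
  next
    case (Suc j')
    then show ?thesis using even_blen[of "f k"] by (auto simp: pos_def)
  qed
  finally show "rho (W f k) j = W f (Suc k) j" .
qed

lemma R_W: assumes "valid f" shows "R (bin_val (W f k)) = bin_val (W f (Suc k))"
proof -
  have "W f k (pos f k 0)" using ones_W by blast
  then have "bin_val (W f k) \<noteq> 0" using bin_val_pos by force
  then show ?thesis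
    by (simp add: R_def beta_bin_val[OF infinite_W] rho_W[OF assms])
qed

lemma Rpow_W: assumes "valid f" shows "(R ^^ k) (bin_val (W f 0)) = bin_val (W f k)"
  by (induction k) (simp_all add: R_W[OF assms])

lemma W_agree:
  "(\<forall>i\<le>m. f (k + i) = g (k + i)) \<Longrightarrow> p \<le> m \<Longrightarrow> W f k p = W g k p"
proof (induction m arbitrary: k p)
  case 0
  then show ?case using W0[of f k] W0[of g k] by simp
next
  case (Suc m)
  have fk: "f k = g k" using Suc.prems(1)[rule_format, of 0] by simp
  have fk1: "f (Suc k) = g (Suc k)" using Suc.prems(1)[rule_format, of 1] by simp
  show ?case
  proof (cases "p < blen (f k)")
    case True
    then show ?thesis using W_low[of p f k, OF True] W_low[of p g k] fk fk1 by simp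
  next
    case False
    define d where "d = p - blen (f k)"
    have p: "p = blen (f k) + 2 * (d div 2) + d mod 2" using False d_def by simp
    have pg: "p = blen (g k) + 2 * (d div 2) + d mod 2" using p fk by simp
    have "Suc (d div 2) \<le> m" using Suc.prems(2) p by (simp add: blen_def split: if_splits)
    moreover have "\<forall>i\<le>m. f (Suc k + i) = g (Suc k + i)" using Suc.prems(1) by auto
    ultimately have e: "W f (Suc k) (Suc (d div 2)) = W g (Suc k) (Suc (d div 2))"
      using Suc.IH by blast
    have "W f k p = (W f (Suc k) (Suc (d div 2)) = (d mod 2 = 1))"
      using W_high[of "d mod 2" f k "d div 2"] p by simp
    moreover have "W g k p = (W g (Suc k) (Suc (d div 2)) = (d mod 2 = 1))"
      using W_high[of "d mod 2" g k "d div 2"] pg by simp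
    ultimately show ?thesis using e by simp
  qed
qed

lemma W_bounds:
  "f k \<Longrightarrow> 1/2 \<le> bin_val (W f k)"
  "\<not> f k \<Longrightarrow> bin_val (W f k) \<le> 1/4"
proof -
  show "f k \<Longrightarrow> 1/2 \<le> bin_val (W f k)" by (rule bin_val_ge_half) (simp add: W0)
  assume n: "\<not> f k"
  have "W f k 1 = blk (f k) (f (Suc k)) 1" by (rule W_low) (use n in \<open>simp add: blen_def\<close>)
  then have "\<not> W f k 1" using n by (simp add: blk_def)
  then show "bin_val (W f k) \<le> 1/4" using n by (intro bin_val_le_quarter) (simp_all add: W0)
qed




lemma limsup_one:
  fixes u :: "nat \<Rightarrow> real"
  assumes le: "\<And>n. u n \<le> 1" and fr: "\<And>r N. r < 1 \<Longrightarrow> \<exists>n\<ge>N. r < u n"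
  shows "limsup (\<lambda>n. ereal (u n)) = 1"
proof (rule antisym)
  show "limsup (\<lambda>n. ereal (u n)) \<le> 1"
    by (rule Limsup_bounded) (simp add: le)
  show "1 \<le> limsup (\<lambda>n. ereal (u n))"
  proof (rule ccontr)
    assume "\<not> 1 \<le> limsup (\<lambda>n. ereal (u n))"
    then have lt: "limsup (\<lambda>n. ereal (u n)) < 1" by simp
    then obtain z where z: "limsup (\<lambda>n. ereal (u n)) < ereal z" "ereal z < 1"
      using ereal_dense2 by blast
    have "eventually (\<lambda>n. ereal z > ereal (u n)) sequentially"
      using Limsup_le_iff[where C="limsup (\<lambda>n. ereal (u n))" and F=sequentially and X="\<lambda>n. ereal (u n)"] z(1) by auto
    then obtain N where N: "\<And>n. n \<ge> N \<Longrightarrow> u n < z" by (auto simp: eventually_sequentially)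
    obtain n where "n \<ge> N" "z < u n" using fr[of z N] z(2) by auto
    then show False using N by force
  qed
qed

lemma liminf_zero:
  fixes u :: "nat \<Rightarrow> real"
  assumes ge: "\<And>n. 0 \<le> u n" and fr: "\<And>r N. 0 < r \<Longrightarrow> \<exists>n\<ge>N. u n < r"
  shows "liminf (\<lambda>n. ereal (u n)) = 0"
proof (rule antisym)
  show "0 \<le> liminf (\<lambda>n. ereal (u n))"
    by (rule Liminf_bounded) (simp add: ge)
  show "liminf (\<lambda>n. ereal (u n)) \<le> 0"
  proof (rule ccontr)
    assume "\<not> liminf (\<lambda>n. ereal (u n)) \<le> 0"
    then have lt: "0 < liminf (\<lambda>n. ereal (u n))" by simp
    then obtain z where z: "0 < ereal z" "ereal z < liminf (\<lambda>n. ereal (u n))"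
      using ereal_dense2 by blast
    have "eventually (\<lambda>n. ereal z < ereal (u n)) sequentially"
      using le_Liminf_iff[where C="liminf (\<lambda>n. ereal (u n))" and F=sequentially and X="\<lambda>n. ereal (u n)"] z(2) by auto
    then obtain N where N: "\<And>n. n \<ge> N \<Longrightarrow> z < u n" by (auto simp: eventually_sequentially)
    obtain n where "n \<ge> N" "u n < z" using fr[of z N] z(1) by auto
    then show False using N by force
  qed
qed

lemma uncountable_bits: "uncountable (UNIV :: (nat \<Rightarrow> bool) set)"
proof
  assume c: "countable (UNIV :: (nat \<Rightarrow> bool) set)"
  define d where "d = (\<lambda>n. \<not> from_nat_into (UNIV :: (nat \<Rightarrow> bool) set) n n)"
  obtain k where "from_nat_into (UNIV :: (nat \<Rightarrow> bool) set) k = d"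
    using from_nat_into_surj[OF c, of d] by auto
  then have "d k = from_nat_into (UNIV :: (nat \<Rightarrow> bool) set) k k" by simp
  then show False unfolding d_def by simp
qed

definition gi :: "nat \<Rightarrow> nat" where "gi m = fst (prod_decode (m div 2))"

definition inst :: "(nat \<Rightarrow> bool) \<Rightarrow> nat \<Rightarrow> bool" where
  "inst w k = (\<exists>m. fact m \<le> k \<and> k < fact (Suc m) \<and> odd m \<and> (even k \<longleftrightarrow> w (gi m)))"

lemma stage_unique:
  assumes "fact m \<le> (k::nat)" "k < fact (Suc m)" "fact m' \<le> k" "k < fact (Suc m')"
  shows "m = m'"
proof (rule ccontr)
  assume "m \<noteq> m'"
  then consider "Suc m \<le> m'" | "Suc m' \<le> m" by linarith
  then show False
  proof cases
    case 1 then have "fact (Suc m) \<le> (fact m' :: nat)" by (rule fact_mono_nat)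
    then show False using assms by linarith
  next
    case 2 then have "fact (Suc m') \<le> (fact m :: nat)" by (rule fact_mono_nat)
    then show False using assms by linarith
  qed
qed

lemma inst_stage:
  assumes "fact m \<le> k" "k < fact (Suc m)"
  shows "inst w k = (odd m \<and> (even k \<longleftrightarrow> w (gi m)))"
  unfolding inst_def using stage_unique[OF assms] assms by blast

lemma valid_inst: "valid (inst w)"
  unfolding valid_def
proof (intro allI impI notI)
  fix k assume a: "inst w k" "inst w (Suc k)"
  then obtain m where m: "fact m \<le> k" "k < fact (Suc m)" "odd m" "even k \<longleftrightarrow> w (gi m)"
    unfolding inst_def by blast
  from a obtain m' where m': "fact m' \<le> Suc k" "Suc k < fact (Suc m')" "odd m'" "even (Suc k) \<longleftrightarrow> w (gi m')"
    unfolding inst_def by blast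
  have "m \<le> m'"
  proof (rule ccontr)
    assume "\<not> m \<le> m'" then have "Suc m' \<le> m" by simp
    then have "fact (Suc m') \<le> (fact m :: nat)" by (rule fact_mono_nat)
    then show False using m m' by linarith
  qed
  moreover have "m' \<le> Suc m"
  proof (rule ccontr)
    assume "\<not> m' \<le> Suc m" then have "Suc (Suc m) \<le> m'" by simp
    then have "fact (Suc (Suc m)) \<le> (fact m' :: nat)" by (rule fact_mono_nat)
    moreover have "fact (Suc (Suc m)) = (Suc (Suc m)) * (fact (Suc m) :: nat)" by simp
    moreover have "(0::nat) < fact (Suc m)" by simp
    ultimately have "2 * fact (Suc m) \<le> (fact m' :: nat)" by (metis le_trans mult_le_mono1 Suc_le_mono le_add1 numeral_2_eq_2 Suc_leI zero_less_Suc)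
    then show False using m m' \<open>(0::nat) < fact (Suc m)\<close> by linarith
  qed
  ultimately have "m' = m \<or> m' = Suc m" by linarith
  then show False
  proof
    assume "m' = m" then show False using m m' by auto
  next
    assume "m' = Suc m" then show False using m m' by auto
  qed
qed

definition xv :: "(nat \<Rightarrow> bool) \<Rightarrow> real" where "xv w = bin_val (W (inst w) 0)"

lemma orbit: "(R ^^ k) (xv w) = bin_val (W (inst w) k)"
  unfolding xv_def by (rule Rpow_W[OF valid_inst])

lemma far:
  assumes "inst w k \<noteq> inst w' k"
  shows "1/4 \<le> \<bar>bin_val (W (inst w) k) - bin_val (W (inst w') k)\<bar>"
proof (cases "inst w k")
  case True
  then show ?thesis using assms W_bounds[of "inst w" k] W_bounds[of "inst w'" k] by auto
next
  case False
  then show ?thesis using assms W_bounds[of "inst w" k] W_bounds[of "inst w'" k] by auto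
qed

lemma sep_stage:
  assumes "odd m" "w (gi m) \<noteq> w' (gi m)" "fact m \<le> k" "k < fact (Suc m)"
  shows "inst w k \<noteq> inst w' k"
  using inst_stage[OF assms(3,4)] assms(1,2) by auto

lemma sync_stage:
  assumes "even m" "fact m \<le> k" "k < fact (Suc m)"
  shows "\<not> inst w k"
  using inst_stage[OF assms(2,3)] assms(1) by auto




definition cl :: "(nat \<Rightarrow> bool) \<Rightarrow> (nat \<Rightarrow> bool) \<Rightarrow> real \<Rightarrow> nat \<Rightarrow> bool" where
  "cl w w' \<delta> k \<longleftrightarrow> \<bar>bin_val (W (inst w) k) - bin_val (W (inst w') k)\<bar> < \<delta>"

lemma card_le_n: "card {k. k < n \<and> P k} \<le> n"
proof -
  have "card {k. k < n \<and> P k} \<le> card {..<n}" by (rule card_mono) auto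
  then show ?thesis by simp
qed

lemma real_diff_ge: "real x - real y \<le> real (x - y)"
  by (cases "y \<le> x") (auto simp: of_nat_diff)

lemma sync_count:
  assumes "even m" "1/2^(Suc j) < \<delta>"
  shows "real (fact (Suc m)) - real j - real (fact m) \<le> real (card {k. k < fact (Suc m) \<and> cl w w' \<delta> k})"
proof -
  have sub: "{fact m ..< fact (Suc m) - j} \<subseteq> {k. k < fact (Suc m) \<and> cl w w' \<delta> k}"
  proof
    fix k assume k: "k \<in> {fact m ..< fact (Suc m) - j}"
    have "\<forall>i\<le>j. inst w (k + i) = inst w' (k + i)"
    proof (intro allI impI)
      fix i assume "i \<le> j"
      then have "fact m \<le> k + i" "k + i < fact (Suc m)" using k by auto
      then show "inst w (k + i) = inst w' (k + i)" using sync_stage[OF assms(1)] by blast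
    qed
    then have "\<forall>p<Suc j. W (inst w) k p = W (inst w') k p"
      using W_agree[of j "inst w" k "inst w'"] by auto
    then have "\<bar>bin_val (W (inst w) k) - bin_val (W (inst w') k)\<bar> \<le> 1/2^(Suc j)"
      by (rule bin_val_close)
    then show "k \<in> {k. k < fact (Suc m) \<and> cl w w' \<delta> k}" using k assms(2) by (auto simp: cl_def)
  qed
  have "card {fact m ..< fact (Suc m) - j} \<le> card {k. k < fact (Suc m) \<and> cl w w' \<delta> k}"
    by (rule card_mono[OF _ sub]) auto
  then have "real (fact (Suc m) - j - fact m) \<le> real (card {k. k < fact (Suc m) \<and> cl w w' \<delta> k})"
    by simp
  moreover have "real (fact (Suc m)) - real j - real (fact m) \<le> real (fact (Suc m) - j - fact m)"
    using real_diff_ge[of "fact (Suc m) - j" "fact m"] real_diff_ge[of "fact (Suc m)" j] by linarith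
  ultimately show ?thesis by linarith
qed

lemma card_sub_lt: "A \<subseteq> {..<(n::nat)} \<Longrightarrow> card A \<le> n"
  using card_mono[of "{..<n}" A] by simp

lemma sep_count:
  assumes "odd m" "w (gi m) \<noteq> w' (gi m)"
  shows "card {k. k < fact (Suc m) \<and> cl w w' (1/4) k} \<le> fact m"
proof -
  have "{k. k < fact (Suc m) \<and> cl w w' (1/4) k} \<subseteq> {..<fact m}"
  proof
    fix k assume k: "k \<in> {k. k < fact (Suc m) \<and> cl w w' (1/4) k}"
    show "k \<in> {..<fact m}"
    proof (rule ccontr)
      assume "k \<notin> {..<fact m}"
      then have "fact m \<le> k" by simp
      then have "inst w k \<noteq> inst w' k" using sep_stage[of m w w' k, OF assms(1) assms(2)] k by auto
      then show False using far[of w k w'] k by (simp add: cl_def)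
    qed
  qed
  then show ?thesis by (rule card_sub_lt)
qed

lemma fact_Suc_real: "real (fact (Suc m)) = (real m + 1) * real (fact m)"
  by (simp add: algebra_simps)

lemma sync_freq:
  assumes "0 < \<delta>" "r < 1"
  shows "\<exists>n\<ge>N. r < real (card {k. k < n \<and> cl w w' \<delta> k}) / real n"
proof -
  obtain j0 where j0: "j0 > 0" "inverse (real j0) < \<delta>" using ex_inverse_of_nat_less[OF assms(1)] by auto
  have "real j0 < 2 ^ Suc j0"
  proof -
    have "j0 < 2 ^ j0" by (rule less_exp)
    then have "real j0 < real (2 ^ j0)" by (simp only: of_nat_less_iff)
    then have "real j0 < 2 ^ j0" by simp
    moreover have "(0::real) \<le> 2 ^ j0" by simp
    ultimately show ?thesis unfolding power_Suc by linarith
  qed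
  then have "1/2^Suc j0 < 1 / real j0"
    by (intro frac_less2) (use j0(1) in auto)
  then have "1/2^Suc j0 < inverse (real j0)" by (simp add: inverse_eq_divide)
  then have j: "1/2^Suc j0 < \<delta>" using j0 by linarith
  obtain M where M: "(real j0 + 1) / (1 - r) < real M" using reals_Archimedean2 by blast
  define m where "m = 2 * (M + N)"
  have em: "even m" by (simp add: m_def)
  have mM: "real M \<le> real m" unfolding m_def by simp
  define F0 where "F0 = real (fact m)"
  define F1 where "F1 = real (fact (Suc m))"
  have F0: "1 \<le> F0" unfolding F0_def by simp
  have F1: "F1 = (real m + 1) * F0" unfolding F0_def F1_def by (rule fact_Suc_real)
  have c: "F1 - real j0 - F0 \<le> real (card {k. k < fact (Suc m) \<and> cl w w' \<delta> k})"
    using sync_count[OF em j, of w w'] unfolding F0_def F1_def .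
  have pos: "0 < F1" using F0 F1 by (simp add: mult_pos_pos)
  have r1: "0 < 1 - r" using assms(2) by simp
  have "real j0 + 1 < real M * (1 - r)" using M r1 by (simp add: divide_less_eq)
  moreover have "real M * (1 - r) \<le> (real m + 1) * (1 - r)"
    by (rule mult_right_mono) (use mM r1 in linarith)+
  ultimately have h1: "real j0 + 1 < (real m + 1) * (1 - r)" by linarith
  have "(real j0 + 1) * F0 < ((real m + 1) * (1 - r)) * F0"
    by (rule mult_strict_right_mono[OF h1]) (use F0 in linarith)
  moreover have "((real m + 1) * (1 - r)) * F0 = F1 - r * F1" using F1 by (simp add: algebra_simps)
  moreover have "(real j0 + 1) * F0 = real j0 * F0 + F0" by (simp add: algebra_simps)
  moreover have "real j0 * 1 \<le> real j0 * F0" by (rule mult_left_mono) (use F0 in simp_all)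
  ultimately have "r * F1 < F1 - real j0 - F0" by linarith
  then have "r < (F1 - real j0 - F0) / F1" using pos by (simp add: pos_less_divide_eq)
  also have "\<dots> \<le> real (card {k. k < fact (Suc m) \<and> cl w w' \<delta> k}) / F1"
    by (rule divide_right_mono[OF c]) (use pos in linarith)
  finally have "r < real (card {k. k < fact (Suc m) \<and> cl w w' \<delta> k}) / real (fact (Suc m))"
    unfolding F1_def .
  moreover have "N \<le> fact (Suc m)"
  proof -
    have "N \<le> Suc m" unfolding m_def by simp
    then show ?thesis using fact_ge_self[of "Suc m"] by (rule le_trans)
  qed
  ultimately show ?thesis by (intro exI[of _ "fact (Suc m)"] conjI)
qed

lemma sep_freq:
  assumes "w i \<noteq> w' i" "0 < r"
  shows "\<exists>n\<ge>N. real (card {k. k < n \<and> cl w w' (1/4) k}) / real n < r"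
proof -
  obtain M where M: "1 / r < real M" using reals_Archimedean2 by blast
  define m where "m = 2 * prod_encode (i, M + N) + 1"
  have om: "odd m" by (simp add: m_def)
  have gm: "gi m = i" by (simp add: m_def gi_def)
  have mM: "M + N \<le> m" using le_prod_encode_2[of "M + N" i] unfolding m_def by linarith
  define F0 where "F0 = real (fact m)"
  define F1 where "F1 = real (fact (Suc m))"
  have F0: "1 \<le> F0" unfolding F0_def by simp
  have F1: "F1 = (real m + 1) * F0" unfolding F0_def F1_def by (rule fact_Suc_real)
  have c: "real (card {k. k < fact (Suc m) \<and> cl w w' (1/4) k}) \<le> F0"
  proof -
    have h: "card {k. k < fact (Suc m) \<and> cl w w' (1/4) k} \<le> fact m"
      by (rule sep_count[OF om]) (simp add: assms gm)
    show ?thesis using h unfolding F0_def of_nat_le_iff .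
  qed
  have pos: "0 < F1" using F0 F1 by (simp add: mult_pos_pos)
  have "1 < r * (real m + 1)"
  proof -
    have "1 / r < real m + 1" using M mM by linarith
    then show ?thesis using assms(2) by (simp add: divide_less_eq mult.commute)
  qed
  then have "1 * F0 < (r * (real m + 1)) * F0"
    by (rule mult_strict_right_mono) (use F0 in linarith)
  moreover have "(r * (real m + 1)) * F0 = r * F1" using F1 by (simp add: algebra_simps)
  ultimately have "F0 < r * F1" by simp
  then have "F0 / F1 < r" using pos by (simp add: divide_less_eq)
  moreover have "real (card {k. k < fact (Suc m) \<and> cl w w' (1/4) k}) / F1 \<le> F0 / F1"
    by (rule divide_right_mono[OF c]) (use pos in linarith)
  ultimately have "real (card {k. k < fact (Suc m) \<and> cl w w' (1/4) k}) / F1 < r" by linarith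
  moreover have "N \<le> fact (Suc m)"
  proof -
    have "N \<le> Suc m" using mM by simp
    then show ?thesis using fact_ge_self[of "Suc m"] by (rule le_trans)
  qed
  ultimately show ?thesis unfolding F1_def by (intro exI[of _ "fact (Suc m)"] conjI)
qed

lemma ratio_le1: "real (card {k. k < n \<and> P k}) / real n \<le> 1"
  using card_le_n[of n P] by (cases "n = 0") (auto simp: divide_le_eq_1)

lemma xv_inj: "inj xv"
proof
  fix w w' assume eq: "xv w = xv w'"
  show "w = w'"
  proof (rule ccontr)
    assume "w \<noteq> w'"
    then obtain i where i: "w i \<noteq> w' i" by auto
    define m where "m = 2 * prod_encode (i, 0) + 1"
    have "odd m" "gi m = i" by (simp_all add: m_def gi_def)
    moreover have "0 < m" using \<open>odd m\<close> by (rule odd_pos)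
    ultimately have "inst w (fact m) \<noteq> inst w' (fact m)" using sep_stage[of m w w' "fact m"] i by simp
    then have "1/4 \<le> \<bar>bin_val (W (inst w) (fact m)) - bin_val (W (inst w') (fact m))\<bar>" by (rule far)
    moreover have "(R ^^ fact m) (xv w) = (R ^^ fact m) (xv w')" using eq by simp
    ultimately show False unfolding orbit by simp
  qed
qed

theorem proposition6p10:
  shows "\<exists>S dbar. S \<subseteq> {0..1::real} \<and> uncountable S \<and> dbar > (0::real) \<and>
    (\<forall>x\<in>S. \<forall>y\<in>S. x \<noteq> y \<longrightarrow>
       (\<forall>\<delta>>0. limsup (\<lambda>n. ereal (real (card {k. k < n \<and> \<bar>(R ^^ k) x - (R ^^ k) y\<bar> < \<delta>}) / real n)) = 1)
     \<and> liminf (\<lambda>n. ereal (real (card {k. k < n \<and> \<bar>(R ^^ k) x - (R ^^ k) y\<bar> < dbar}) / real n)) = 0)"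
proof (intro exI conjI ballI impI allI)
  show "range xv \<subseteq> {0..1::real}" by (auto simp: xv_def bin_val_ge0 bin_val_le1)
  show "uncountable (range xv)"
    using countable_image_inj_on[of xv UNIV] xv_inj uncountable_bits by blast
  show "(0::real) < 1/4" by simp
  fix x y assume x: "x \<in> range xv" and y: "y \<in> range xv" and ne: "x \<noteq> y"
  from x y obtain w w' where xy: "x = xv w" "y = xv w'" by auto
  have "w \<noteq> w'" using ne xy by auto
  then have "\<exists>i. w i \<noteq> w' i" by (simp add: fun_eq_iff)
  then obtain i where i: "w i \<noteq> w' i" by blast
  have sets: "\<And>d n. {k. k < n \<and> \<bar>(R ^^ k) x - (R ^^ k) y\<bar> < d} = {k. k < n \<and> cl w w' d k}"
    unfolding xy orbit cl_def ..
  show "liminf (\<lambda>n. ereal (real (card {k. k < n \<and> \<bar>(R ^^ k) x - (R ^^ k) y\<bar> < 1/4}) / real n)) = 0"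
    unfolding sets by (rule liminf_zero) (auto intro: sep_freq[where w=w and w'=w' and i=i, OF i])
  fix \<delta> :: real assume d: "0 < \<delta>"
  show "limsup (\<lambda>n. ereal (real (card {k. k < n \<and> \<bar>(R ^^ k) x - (R ^^ k) y\<bar> < \<delta>}) / real n)) = 1"
    unfolding sets by (rule limsup_one) (auto intro: ratio_le1 sync_freq[OF d])
qed


end
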